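(* Let $\mathcal G=(\mathcal V,\mathcal E)$ be a weakly connected digraph without self-loops with node set partitioned as $\mathcal V=\mathcal M\cup\mathcal P$ (nodes in $\mathcal M$: DGUs and loads; nodes in $\mathcal P$: power lines), such that every edge has exactly one endpoint in $\mathcal M$ and one in $\mathcal P$, and each line $l\in\mathcal P$ has exactly one in-neighbour $a\in\mathcal M$ and exactly one out-neighbour $b\in\mathcal M$. To each node $k\in\mathcal M$ associate a voltage $V_k\in\mathbb R^2$, interaction output $z_k=V_k$ and interaction input \[ d_k=-\sum_{l\in\mathcal N_k^+}I_l+\sum_{l\in\mathcal N_k^-}I_l , \] and to each line $l\in\mathcal P$ (from $a$ to $b$) associate a current $I_l\in\mathbb R^2$, interaction output $z_l=[I_l^\top,-I_l^\top]^\top\in\mathbb R^4$ and interaction input $d_l=[V_a^\top,V_b^\top]^\top$. Then this interconnection is skew-symmetric: there exist matrices $\phi_{vw}$ of appropriate dimensions such that for every $v\in\mathcal V$, \[ d_v=\sum_{w\in\mathcal N_v}\phi_{vw}z_w=\sum_{w\in\mathcal N^+_v}\phi_{vw}z_w-\sum_{w\in\mathcal N^-_v}\phi_{wv}^\top z_w , \] i.e. $\phi_{vw}=-\phi_{wv}^\top$ for all neighbouring $v,w$, so that the stacked relation $d=\Phi z$ has $\Phi=-\Phi^\top$.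
   Context: For a node $v$ of a digraph, $\mathcal N_v^+=\{w:(v,w)\in\mathcal E\}$ denotes the out-neighbours, $\mathcal N_v^-=\{w:(w,v)\in\mathcal E\}$ the in-neighbours and $\mathcal N_v=\mathcal N_v^+\cup\mathcal N_v^-$. The edge orientation gives the reference direction of the positive line current. All electrical vectors are dq components. *)

theory Defs
  imports Complex_Main
begin

text \<open>Digraph on node type 'a with node set Vs and edge set E.
  Vectors in R^n are represented as functions nat => real whose
  components 0..n-1 are relevant; matrices as nat => nat => real.\<close>

definition outN :: "('a \<times> 'a) set \<Rightarrow> 'a \<Rightarrow> 'a set" where
  "outN E v = {w. (v, w) \<in> E}"

definition inN :: "('a \<times> 'a) set \<Rightarrow> 'a \<Rightarrow> 'a set" where
  "inN E v = {w. (w, v) \<in> E}"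

definition nbr :: "('a \<times> 'a) set \<Rightarrow> 'a \<Rightarrow> 'a set" where
  "nbr E v = outN E v \<union> inN E v"

definition weakly_connected :: "'a set \<Rightarrow> ('a \<times> 'a) set \<Rightarrow> bool" where
  "weakly_connected Vs E \<longleftrightarrow> (\<forall>u\<in>Vs. \<forall>v\<in>Vs. (u, v) \<in> (E \<union> E\<inverse>)\<^sup>*)"

definition dimv :: "'a set \<Rightarrow> 'a \<Rightarrow> nat" where
  "dimv M v = (if v \<in> M then 2 else 4)"

definition src :: "('a \<times> 'a) set \<Rightarrow> 'a \<Rightarrow> 'a" where
  "src E l = (THE a. (a, l) \<in> E)"

definition dst :: "('a \<times> 'a) set \<Rightarrow> 'a \<Rightarrow> 'a" where
  "dst E l = (THE b. (l, b) \<in> E)"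

definition zvec :: "'a set \<Rightarrow> ('a \<Rightarrow> nat \<Rightarrow> real) \<Rightarrow> ('a \<Rightarrow> nat \<Rightarrow> real)
    \<Rightarrow> 'a \<Rightarrow> nat \<Rightarrow> real" where
  "zvec M Vt I v = (if v \<in> M then Vt v
     else (\<lambda>i. if i < 2 then I v i else - I v (i - 2)))"

definition dvec :: "'a set \<Rightarrow> ('a \<times> 'a) set \<Rightarrow> ('a \<Rightarrow> nat \<Rightarrow> real)
    \<Rightarrow> ('a \<Rightarrow> nat \<Rightarrow> real) \<Rightarrow> 'a \<Rightarrow> nat \<Rightarrow> real" where
  "dvec M E Vt I v = (if v \<in> M
     then (\<lambda>i. - (\<Sum>l\<in>outN E v. I l i) + (\<Sum>l\<in>inN E v. I l i))
     else (\<lambda>i. if i < 2 then Vt (src E v) i else Vt (dst E v) (i - 2)))"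

end

theory Submission
  imports Defs
begin

lemma sum4: "sum (f::nat\<Rightarrow>real) {..<4} = f 0 + f 1 + f 2 + f 3"
  by (simp add: eval_nat_numeral)

lemma sum2: "sum (f::nat\<Rightarrow>real) {..<2} = f 0 + f 1"
  by (simp add: eval_nat_numeral)

theorem lemma3:
  fixes Vs M P :: "'a set" and E :: "('a \<times> 'a) set"
  assumes fin: "finite Vs"
    and edges: "E \<subseteq> Vs \<times> Vs"
    and noloop: "\<forall>v. (v, v) \<notin> E"
    and wconn: "weakly_connected Vs E"
    and part: "M \<union> P = Vs" "M \<inter> P = {}"
    and bip: "\<forall>(x, y)\<in>E. (x \<in> M \<and> y \<in> P) \<or> (x \<in> P \<and> y \<in> M)"
    and lines: "\<forall>l\<in>P. (\<exists>!a. (a, l) \<in> E) \<and> (\<exists>!b. (l, b) \<in> E)"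
  shows "\<exists>\<phi> :: 'a \<Rightarrow> 'a \<Rightarrow> nat \<Rightarrow> nat \<Rightarrow> real.
     (\<forall>v\<in>Vs. \<forall>w\<in>nbr E v. \<forall>i<dimv M v. \<forall>j<dimv M w. \<phi> v w i j = - \<phi> w v j i)
   \<and> (\<forall>v\<in>Vs. \<forall>w\<in>Vs. w \<notin> nbr E v \<longrightarrow> (\<forall>i<dimv M v. \<forall>j<dimv M w. \<phi> v w i j = 0))
   \<and> (\<forall>Vt I. \<forall>v\<in>Vs. \<forall>i<dimv M v.
        dvec M E Vt I v i = (\<Sum>w\<in>nbr E v. \<Sum>j<dimv M w. \<phi> v w i j * zvec M Vt I w j))"
proof -
  define \<psi> :: "'a \<Rightarrow> 'a \<Rightarrow> nat \<Rightarrow> nat \<Rightarrow> real" where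
    "\<psi> l k i j = (if (k, l) \<in> E \<and> i = j then 1 else 0) + (if (l, k) \<in> E \<and> i = j + 2 then 1 else 0)"
    for l k i j
  define \<phi> :: "'a \<Rightarrow> 'a \<Rightarrow> nat \<Rightarrow> nat \<Rightarrow> real" where
    "\<phi> v w i j = (if v \<in> P \<and> w \<in> M then \<psi> v w i j
        else if v \<in> M \<and> w \<in> P then - \<psi> w v j i else 0)" for v w i j
  have skew: "\<phi> v w i j = - \<phi> w v j i" for v w i j
    using part(2) unfolding \<phi>_def by auto
  have nonb: "\<phi> v w i j = 0" if "w \<notin> nbr E v" for v w i j
    using that unfolding \<phi>_def \<psi>_def nbr_def outN_def inN_def by auto
  have finN: "finite (nbr E v)" for v
    by (rule finite_subset[OF _ fin]) (use edges in \<open>auto simp: nbr_def outN_def inN_def\<close>)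
  have main: "dvec M E Vt I v i = (\<Sum>w\<in>nbr E v. \<Sum>j<dimv M w. \<phi> v w i j * zvec M Vt I w j)"
    if v: "v \<in> Vs" and i: "i < dimv M v" for Vt I v i
  proof (cases "v \<in> M")
    case True
    have i2: "i < 2" using i True by (simp add: dimv_def)
    have nP: "w \<in> P" if "w \<in> nbr E v" for w
      using that bip True part(2) unfolding nbr_def outN_def inN_def by auto
    have inner: "(\<Sum>j<dimv M w. \<phi> v w i j * zvec M Vt I w j) =
        (if w \<in> outN E v then - I w i else 0) + (if w \<in> inN E v then I w i else 0)"
      if w: "w \<in> nbr E v" for w
    proof -
      have wP: "w \<in> P" "w \<notin> M" using nP[OF w] part(2) by auto
      have e1: "\<phi> v w i j = - \<psi> w v j i" for j using wP True by (simp add: \<phi>_def)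
      have e2: "zvec M Vt I w j = (if j < 2 then I w j else - I w (j - 2))" for j using wP by (simp add: zvec_def)
      have d: "dimv M w = 4" using wP by (simp add: dimv_def)
      have "(\<Sum>j<dimv M w. \<phi> v w i j * zvec M Vt I w j) =
         - \<psi> w v 0 i * I w 0 - \<psi> w v 1 i * I w 1 + \<psi> w v 2 i * I w 0 + \<psi> w v 3 i * I w 1"
        by (simp only: d e1 e2 sum4) simp
      also have "\<dots> = (if w \<in> outN E v then - I w i else 0) + (if w \<in> inN E v then I w i else 0)"
      proof -
        have "i = 0 \<or> i = 1" using i2 by auto
        then show ?thesis by (elim disjE) (simp_all add: \<psi>_def inN_def outN_def)
      qed
      finally show ?thesis .
    qed
    have "(\<Sum>w\<in>nbr E v. \<Sum>j<dimv M w. \<phi> v w i j * zvec M Vt I w j) =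
       (\<Sum>w\<in>nbr E v. (if w \<in> outN E v then - I w i else 0)) + (\<Sum>w\<in>nbr E v. (if w \<in> inN E v then I w i else 0))"
      using inner by (simp add: sum.distrib)
    also have "\<dots> = (\<Sum>w\<in>outN E v. - I w i) + (\<Sum>w\<in>inN E v. I w i)"
    proof -
      have h1: "(\<Sum>w\<in>nbr E v. (if w \<in> outN E v then - I w i else 0)) = (\<Sum>w\<in>nbr E v \<inter> outN E v. - I w i)"
        by (rule sum.inter_restrict[OF finN, symmetric])
      have h2: "(\<Sum>w\<in>nbr E v. (if w \<in> inN E v then I w i else 0)) = (\<Sum>w\<in>nbr E v \<inter> inN E v. I w i)"
        by (rule sum.inter_restrict[OF finN, symmetric])
      have "nbr E v \<inter> outN E v = outN E v" "nbr E v \<inter> inN E v = inN E v" by (auto simp: nbr_def)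
      then show ?thesis using h1 h2 by simp
    qed
    finally show ?thesis using True by (simp add: dvec_def sum_negf)
  next
    case False
    then have vP: "v \<in> P" using v part by auto
    have i4: "i < 4" using i False by (simp add: dimv_def)
    obtain a where a: "(a, v) \<in> E" "\<And>a'. (a', v) \<in> E \<Longrightarrow> a' = a" using lines vP by blast
    obtain b where b: "(v, b) \<in> E" "\<And>b'. (v, b') \<in> E \<Longrightarrow> b' = b" using lines vP by blast
    have sa: "src E v = a" unfolding src_def by (rule the_equality[where P="\<lambda>x. (x, v) \<in> E", OF a(1) a(2)])
    have db: "dst E v = b" unfolding dst_def by (rule the_equality[where P="\<lambda>x. (v, x) \<in> E", OF b(1) b(2)])
    have inN: "inN E v = {a}" unfolding inN_def using a(1) by (blast dest: a(2))
    have outN: "outN E v = {b}" unfolding outN_def using b(1) by (blast dest: b(2))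
    have nM: "w \<in> M" if "w \<in> nbr E v" for w
      using that bip vP part(2) unfolding nbr_def outN_def inN_def by auto
    have inner: "(\<Sum>j<dimv M w. \<phi> v w i j * zvec M Vt I w j) =
        (if w \<in> inN E v \<and> i < 2 then Vt w i else 0) + (if w \<in> outN E v \<and> 2 \<le> i then Vt w (i - 2) else 0)"
      if w: "w \<in> nbr E v" for w
    proof -
      have wM: "w \<in> M" "w \<notin> P" using nM[OF w] part(2) by auto
      have e1: "\<phi> v w i j = \<psi> v w i j" for j using wM vP by (simp add: \<phi>_def)
      have e2: "zvec M Vt I w j = Vt w j" for j using wM by (simp add: zvec_def)
      have d: "dimv M w = 2" using wM by (simp add: dimv_def)
      have "(\<Sum>j<dimv M w. \<phi> v w i j * zvec M Vt I w j) = \<psi> v w i 0 * Vt w 0 + \<psi> v w i 1 * Vt w 1"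
        by (simp only: d e1 e2 sum2)
      also have "\<dots> = (if w \<in> inN E v \<and> i < 2 then Vt w i else 0) + (if w \<in> outN E v \<and> 2 \<le> i then Vt w (i - 2) else 0)"
      proof -
        have "i = 0 \<or> i = 1 \<or> i = 2 \<or> i = 3" using i4 by auto
        then show ?thesis by (elim disjE) (simp_all add: \<psi>_def inN_def outN_def)
      qed
      finally show ?thesis .

    qed
    have "(\<Sum>w\<in>nbr E v. \<Sum>j<dimv M w. \<phi> v w i j * zvec M Vt I w j) =
       (\<Sum>w\<in>nbr E v. (if w \<in> inN E v \<and> i < 2 then Vt w i else 0)) + (\<Sum>w\<in>nbr E v. (if w \<in> outN E v \<and> 2 \<le> i then Vt w (i - 2) else 0))"
      using inner by (simp add: sum.distrib)
    also have "\<dots> = (if i < 2 then Vt a i else 0) + (if 2 \<le> i then Vt b (i - 2) else 0)"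
      using finN[of v] by (simp add: inN outN nbr_def)
    finally show ?thesis using False sa db by (simp add: dvec_def)
  qed
  show ?thesis
    by (rule exI[of _ \<phi>]) (use skew nonb main in blast)
qed

end
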